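(* Let $\sigma=(k_1,\ldots,k_\ell)$ be a tuple of positive integers with $\ell\ge 2$ and $K=\sum_{i=1}^\ell k_i\ge 2$. Let $C_\sigma=\sum_{j=0}^{\ell-1}3^{\ell-1-j}2^{k_1+\cdots+k_j}$ and $\rho=C_\sigma/(2^K-3^\ell)\in\mathbb Z_2$. Define $x_0=\rho$ and $x_j=T(x_{j-1})$ for $j\ge 1$, where $T(x)=(3x+1)/2^{v_2(3x+1)}$ on $2$-adic integers $x$ with $3x+1\neq 0$. Then $v_2(3x_{j-1}+1)=k_j$ for each $j=1,\ldots,\ell$ (i.e. $\sigma$ is a phantom family: the $2$-adic root $\rho$ realizes the valuation pattern $\sigma$).
   Context: $\mathbb Z_2$ is the ring of $2$-adic integers; $2^K-3^\ell$ is odd, hence a unit in $\mathbb Z_2$. $v_2$ is the $2$-adic valuation on $\mathbb Z_2$; the empty sum $k_1+\cdots+k_0$ is $0$. *)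

theory Defs
  imports "HOL-Computational_Algebra.Computational_Algebra"
begin

text \<open>2-adic integers that are rational: the local ring Z_(2) of rationals with odd
  denominator, which embeds into Z_2 preserving the 2-adic valuation.  All objects in the
  statement (rho and its T-orbit) live in this subring.\<close>

definition Z2loc :: "rat set" where
  "Z2loc = {x. odd (snd (quotient_of x))}"

text \<open>2-adic valuation of a rational (value at 0 is irrelevant, set to 0).\<close>
definition v2 :: "rat \<Rightarrow> int" where
  "v2 x = (let (a, b) = quotient_of x in
             int (multiplicity (2::int) a) - int (multiplicity (2::int) b))"

definition T :: "rat \<Rightarrow> rat" where
  "T x = (3 * x + 1) / 2 powi v2 (3 * x + 1)"

definition C_sigma :: "nat list \<Rightarrow> int" where
  "C_sigma ks = (\<Sum>j<length ks. 3 ^ (length ks - 1 - j) * 2 ^ sum_list (take j ks))"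

definition rho :: "nat list \<Rightarrow> rat" where
  "rho ks = of_int (C_sigma ks) / of_int (2 ^ sum_list ks - 3 ^ length ks)"

end

theory Submission
  imports Defs
begin

lemma v2_char:
  fixes a b :: int and e :: nat
  assumes "odd a" "odd b"
  shows "v2 (2 ^ e * of_int a / of_int b) = int e"
proof -
  define x :: rat where "x = 2 ^ e * of_int a / of_int b"
  obtain p q where pq: "quotient_of x = (p, q)" by (cases "quotient_of x")
  have q0: "q > 0" using pq quotient_of_denom_pos by blast
  have xe: "x = of_int p / of_int q" using pq quotient_of_div by blast
  have a0: "a \<noteq> 0" "b \<noteq> 0" using assms by auto
  have "of_int p / of_int q = (2 ^ e * of_int a / of_int b :: rat)" using xe x_def by simp
  hence "of_int (p * b) = (of_int (2 ^ e * a * q) :: rat)" using q0 a0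
    by (simp add: field_simps)
  hence eq: "p * b = 2 ^ e * a * q" by linarith
  have p0: "p \<noteq> 0" using eq a0 q0 by auto
  have "multiplicity (2::int) (p * b) = multiplicity 2 p"
    using p0 a0 assms by (simp add: prime_elem_multiplicity_mult_distrib not_dvd_imp_multiplicity_0)
  moreover have "multiplicity (2::int) (2 ^ e * a * q) = e + multiplicity 2 q"
    using q0 a0 assms by (simp add: prime_elem_multiplicity_mult_distrib not_dvd_imp_multiplicity_0)
  ultimately have "multiplicity (2::int) p = e + multiplicity 2 q" using eq by simp
  thus ?thesis unfolding v2_def using pq x_def by simp
qed

lemma Z2loc_char:
  fixes a b :: int
  assumes "odd b"
  shows "(of_int a / of_int b :: rat) \<in> Z2loc"
proof -
  define x :: rat where "x = of_int a / of_int b"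
  obtain p q where pq: "quotient_of x = (p, q)" by (cases "quotient_of x")
  have q0: "q > 0" using pq quotient_of_denom_pos by blast
  have xe: "x = of_int p / of_int q" using pq quotient_of_div by blast
  have cop: "coprime p q" using pq quotient_of_coprime by blast
  have b0: "b \<noteq> 0" using assms by auto
  have "of_int p / of_int q = (of_int a / of_int b :: rat)" using xe x_def by simp
  hence "of_int (p * b) = (of_int (a * q) :: rat)" using q0 b0
    by (simp add: field_simps)
  hence eq: "p * b = a * q" by linarith
  hence "q dvd p * b" by simp
  hence "q dvd b" using cop by (meson coprime_commute coprime_dvd_mult_right_iff)
  hence "odd q" using assms by (meson dvd_trans)
  thus ?thesis unfolding Z2loc_def using pq x_def by simp
qed

lemma S_step: "j < length ks \<Longrightarrow> sum_list (take (Suc j) ks) = sum_list (take j ks) + ks!j"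
  by (simp add: take_Suc_conv_app_nth)

lemma S_strict:
  assumes "\<forall>k\<in>set ks. k > (0::nat)" "j < m" "m \<le> length ks"
  shows "sum_list (take j ks) + 1 \<le> sum_list (take m ks)"
  using assms(2,3)
proof (induction m)
  case 0 then show ?case by simp
next
  case (Suc m)
  have "ks ! m > 0" using assms(1) Suc.prems by auto
  hence e: "sum_list (take (Suc m) ks) = sum_list (take m ks) + ks!m" "ks!m > 0"
    using S_step[of m ks] Suc.prems by auto
  show ?case
  proof (cases "j < m")
    case True then show ?thesis using Suc e by simp
  next
    case False then have "j = m" using Suc.prems by simp
    then show ?thesis using e by simp
  qed
qed

theorem mainTheorem9:
  fixes ks :: "nat list"
  assumes "length ks \<ge> 2"
    and "\<forall>k\<in>set ks. k > 0"
    and "sum_list ks \<ge> 2"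
  shows "rho ks \<in> Z2loc \<and>
    (\<forall>j\<in>{1..length ks}. 3 * (T ^^ (j - 1)) (rho ks) + 1 \<noteq> 0 \<and>
        v2 (3 * (T ^^ (j - 1)) (rho ks) + 1) = int (ks ! (j - 1)))"
proof -
  define L where "L = length ks"
  define K where "K = sum_list ks"
  define S where "S = (\<lambda>j. sum_list (take j ks))"
  define C where "C = C_sigma ks"
  define D :: int where "D = 2 ^ K - 3 ^ L"
  define P :: "nat \<Rightarrow> int" where "P = (\<lambda>j. \<Sum>i<j. 3 ^ (j - 1 - i) * 2 ^ S i)"
  define N :: "nat \<Rightarrow> int" where "N = (\<lambda>j. 3 ^ j * C + D * P j)"
  define y :: "nat \<Rightarrow> rat" where "y = (\<lambda>j. of_int (N j) / (of_int D * 2 ^ S j))"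
  have C_def': "C = (\<Sum>m<L. 3 ^ (L - 1 - m) * 2 ^ S m)"
    unfolding C_def C_sigma_def L_def S_def by simp
  have SL: "S L = K" unfolding S_def L_def K_def by simp
  have L2: "L \<ge> 2" using assms(1) L_def by simp
  have Dodd: "odd D" unfolding D_def using assms(3) K_def by simp
  hence D0: "D \<noteq> 0" by auto
  have rho_eq: "rho ks = of_int C / of_int D"
    unfolding rho_def C_def D_def K_def L_def by simp
  have Pstep: "P (Suc j) = 3 * P j + 2 ^ S j" for j
  proof -
    have "P (Suc j) = (\<Sum>i<j. 3 ^ (j - i) * 2 ^ S i) + 2 ^ S j"
      unfolding P_def by simp
    also have "(\<Sum>i<j. 3 ^ (j - i) * 2 ^ S i) = (\<Sum>i<j. 3 * (3 ^ (j - 1 - i) * (2::int) ^ S i))"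
    proof (rule sum.cong)
      fix i assume "i \<in> {..<j}"
      hence "j - i = Suc (j - 1 - i)" by auto
      thus "3 ^ (j - i) * 2 ^ S i = 3 * (3 ^ (j - 1 - i) * 2 ^ S i :: int)" by simp
    qed simp
    finally show ?thesis unfolding P_def by (simp add: sum_distrib_left)
  qed
  have Nstep: "N (Suc j) = 3 * N j + D * 2 ^ S j" for j
    unfolding N_def using Pstep[of j] by (simp add: algebra_simps)
  have step: "3 * y j + 1 = 2 ^ (ks ! j) * y (Suc j)" if "j < L" for j
  proof -
    have "S (Suc j) = S j + ks ! j" unfolding S_def using that L_def S_step by simp
    hence "y (Suc j) = of_int (3 * N j + D * 2 ^ S j) / (of_int D * 2 ^ S j * 2 ^ (ks ! j))"
      unfolding y_def using Nstep by (simp add: power_add)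
    thus ?thesis unfolding y_def using D0 by (simp add: field_simps)
  qed
  have Nform: "N j = (\<Sum>m\<in>{j..<L}. 3 ^ (L - 1 - m + j) * 2 ^ S m) + 2 ^ K * P j"
    if "j \<le> L" for j
  proof -
    have "3 ^ j * C = (\<Sum>m<L. 3 ^ (L - 1 - m + j) * 2 ^ S m)"
      unfolding C_def' sum_distrib_left
    proof (rule sum.cong)
      fix m assume "m \<in> {..<L}"
      hence "L - 1 - m + j = (L - 1 - m) + j" by auto
      thus "3 ^ j * (3 ^ (L - 1 - m) * 2 ^ S m) = (3::int) ^ (L - 1 - m + j) * 2 ^ S m"
        by (simp only: power_add mult_ac)
    qed simp
    also have "\<dots> = (\<Sum>m\<in>{0..<j}. 3 ^ (L - 1 - m + j) * 2 ^ S m)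
        + (\<Sum>m\<in>{j..<L}. 3 ^ (L - 1 - m + j) * 2 ^ S m)"
      using that by (simp add: atLeast0LessThan[symmetric] sum.atLeastLessThan_concat)
    also have "(\<Sum>m\<in>{0..<j}. 3 ^ (L - 1 - m + j) * 2 ^ S m) = (3::int) ^ L * P j"
      unfolding P_def sum_distrib_left atLeast0LessThan
    proof (rule sum.cong)
      fix m assume "m \<in> {..<j}"
      hence "L - 1 - m + j = L + (j - 1 - m)" using that by auto
      thus "3 ^ (L - 1 - m + j) * 2 ^ S m = (3::int) ^ L * (3 ^ (j - 1 - m) * 2 ^ S m)"
        by (simp add: power_add)
    qed simp
    finally show ?thesis unfolding N_def D_def by (simp add: algebra_simps)
  qed
  have form_lt: "\<exists>u. odd u \<and> N j = 2 ^ S j * u" if "j < L" for j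
  proof -
    have "(\<Sum>m\<in>{j..<L}. 3 ^ (L - 1 - m + j) * 2 ^ S m) =
        3 ^ (L - 1) * 2 ^ S j + (\<Sum>m\<in>{Suc j..<L}. 3 ^ (L - 1 - m + j) * (2::int) ^ S m)"
      using that by (simp add: sum.atLeast_Suc_lessThan)
    moreover have "2 ^ (S j + 1) dvd (\<Sum>m\<in>{Suc j..<L}. 3 ^ (L - 1 - m + j) * (2::int) ^ S m)"
    proof (rule dvd_sum)
      fix m assume "m \<in> {Suc j..<L}"
      hence "S j + 1 \<le> S m" unfolding S_def using S_strict[OF assms(2), of j m] L_def by auto
      hence "(2::int) ^ (S j + 1) dvd 2 ^ S m" by (rule le_imp_power_dvd)
      thus "2 ^ (S j + 1) dvd 3 ^ (L - 1 - m + j) * (2::int) ^ S m" by simp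
    qed
    moreover have "S j + 1 \<le> K"
      using S_strict[OF assms(2), of j L] that SL L_def S_def by auto
    hence "(2::int) ^ (S j + 1) dvd 2 ^ K * P j" by (intro dvd_mult2 le_imp_power_dvd)
    ultimately have "2 ^ (S j + 1) dvd (N j - 3 ^ (L - 1) * 2 ^ S j)"
      using Nform[of j] that by simp
    then obtain Q where Q: "N j - 3 ^ (L - 1) * 2 ^ S j = 2 ^ (S j + 1) * Q" by blast
    show ?thesis
      by (rule exI[of _ "3 ^ (L - 1) + 2 * Q"]) (use Q in \<open>auto simp: algebra_simps\<close>)
  qed
  have Codd: "odd C"
  proof -
    obtain u where "odd u" "N 0 = 2 ^ S 0 * u" using form_lt[of 0] L2 by auto
    moreover have "N 0 = C" "S 0 = 0" unfolding N_def P_def S_def by simp_all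
    ultimately show ?thesis by simp
  qed
  have form: "\<exists>u. odd u \<and> N j = 2 ^ S j * u" if "j \<le> L" for j
  proof (cases "j < L")
    case True then show ?thesis using form_lt by blast
  next
    case False
    hence j: "j = L" using that by simp
    have "P L = C" unfolding P_def C_def' by simp
    hence "N L = 2 ^ K * C" using Nform[of L] by simp
    thus ?thesis using j SL Codd by auto
  qed
  have yform: "\<exists>u. odd u \<and> y j = of_int u / of_int D" if jL: "j \<le> L" for j
  proof -
    obtain u where o: "odd u" "N j = 2 ^ S j * u" using form[OF jL] by blast
    have "y j = of_int u / of_int D" unfolding y_def o(2) by simp
    thus ?thesis using o by blast
  qed
  have y0: "y 0 = rho ks" unfolding y_def N_def P_def S_def rho_eq by simp
  have key: "3 * y j + 1 \<noteq> 0 \<and> v2 (3 * y j + 1) = int (ks ! j) \<and> T (y j) = y (Suc j)"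
    if jL: "j < L" for j
  proof -
    obtain u where o: "odd u" "y (Suc j) = of_int u / of_int D" using yform[of "Suc j"] jL by auto
    have e: "3 * y j + 1 = 2 ^ (ks ! j) * of_int u / of_int D" using step[OF jL] o by simp
    have v: "v2 (3 * y j + 1) = int (ks ! j)" unfolding e using v2_char[OF o(1) Dodd] by simp
    have nz: "3 * y j + 1 \<noteq> 0" unfolding e using o(1) D0 by auto
    have "T (y j) = y (Suc j)" unfolding T_def v using step[OF jL]
      by (simp add: power_int_of_nat)
    thus ?thesis using v nz by simp
  qed
  have iter: "(T ^^ j) (rho ks) = y j" if "j \<le> L" for j
    using that
  proof (induction j)
    case 0 then show ?case using y0 by simp
  next
    case (Suc j) then show ?case using key[of j] by simp
  qed
  have "rho ks \<in> Z2loc" unfolding rho_eq using Z2loc_char[OF Dodd] by simp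
  moreover have "\<forall>j\<in>{1..length ks}. 3 * (T ^^ (j - 1)) (rho ks) + 1 \<noteq> 0 \<and>
        v2 (3 * (T ^^ (j - 1)) (rho ks) + 1) = int (ks ! (j - 1))"
  proof
    fix j assume "j \<in> {1..length ks}"
    hence j: "j - 1 < L" unfolding L_def by auto
    show "3 * (T ^^ (j - 1)) (rho ks) + 1 \<noteq> 0 \<and>
        v2 (3 * (T ^^ (j - 1)) (rho ks) + 1) = int (ks ! (j - 1))"
      using iter[of "j - 1"] key[OF j] j by simp
  qed
  ultimately show ?thesis by blast
qed

end
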